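(* Let $\Lambda$ be a Legendrian knot. (i) If $4|\operatorname{rot}(\Lambda)|+\operatorname{tb}(\Lambda)\ge0$, then $m(\Lambda)\ge\left\lceil\sqrt{4|\operatorname{rot}(\Lambda)|+\operatorname{tb}(\Lambda)}\right\rceil$. (ii) If $\operatorname{tb}(\Lambda)\le0$, then $m(\Lambda)\ge\left\lceil\sqrt{-\operatorname{tb}(\Lambda)}\right\rceil$. More precisely, if $\Lambda$ is depicted by a suitably connected Legendrian $n$-mosaic, then $n^2\ge4|\operatorname{rot}(\Lambda)|+\operatorname{tb}(\Lambda)$ and $n^2\ge-\operatorname{tb}(\Lambda)$.
   Context: Legendrian knots are taken in the standard contact structure on $\mathbb{R}^3$ and represented by front ($xz$-) projections, which have cusps in place of vertical tangencies and in which the strand of more negative slope is the overstrand at every crossing. For an oriented front with $P$ positive crossings, $N$ negative crossings, $C$ cusps, $D$ downward-oriented and $U$ upward-oriented cusps, $\operatorname{tb}=P-N-\frac12C$ and $\operatorname{rot}=\frac12(D-U)$. Legendrian mosaic tiles: a square tile whose four edge midpoints are potential connection points; the tiles are $T_0$ (empty); $T_1,\dots,T_4$ (a single arc joining midpoints of two adjacent edges, one per pair of adjacent edges); $T_5,T_6$ (a segment joining midpoints of opposite edges); $T_7,T_8$ (two disjoint arcs each joining adjacent edges, using all four midpoints); $T_{10}$ (two crossing segments joining opposite edges). A Legendrian $n$-mosaic is an $n\times n$ array of these tiles with the array rotated $45^\circ$ counterclockwise so the strands form a front diagram (after rotation $T_2$, $T_4$ contain one cusp and $T_8$ two cusps;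 $T_1,T_3,T_7$ contain none; in $T_{10}$ the negative-slope strand is over). It is suitably connected if connection points agree across shared edges and none lies on the outer boundary. The mosaic number $m(\Lambda)$ is the smallest $n$ such that some suitably connected Legendrian $n$-mosaic depicts a front of a Legendrian knot Legendrian isotopic to $\Lambda$. *)

theory Defs
  imports Complex_Main
begin

text \<open>Sides of an (unrotated) mosaic tile; the connection points are the midpoints of these sides.
  Tile positions are integer pairs (r, c): row r, column c; the north neighbour of (r,c) is
  (r-1,c), the east neighbour is (r,c+1).\<close>

datatype side = N | E | S | W

datatype tile = T0 | T1 | T2 | T3 | T4 | T5 | T6 | T7 | T8 | T10

fun pieces :: "tile \<Rightarrow> side set set" where
  "pieces T0 = {}"
| "pieces T1 = {{W, S}}"
| "pieces T2 = {{E, S}}"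
| "pieces T3 = {{N, E}}"
| "pieces T4 = {{N, W}}"
| "pieces T5 = {{W, E}}"
| "pieces T6 = {{N, S}}"
| "pieces T7 = {{N, E}, {W, S}}"
| "pieces T8 = {{N, W}, {E, S}}"
| "pieces T10 = {{N, S}, {W, E}}"

definition conn :: "tile \<Rightarrow> side set" where
  "conn t = \<Union> (pieces t)"

fun opp :: "side \<Rightarrow> side" where
  "opp N = S" | "opp S = N" | "opp E = W" | "opp W = E"

fun nbr :: "int \<times> int \<Rightarrow> side \<Rightarrow> int \<times> int" where
  "nbr (r, c) N = (r - 1, c)"
| "nbr (r, c) S = (r + 1, c)"
| "nbr (r, c) E = (r, c + 1)"
| "nbr (r, c) W = (r, c - 1)"

definition is_mosaic :: "nat \<Rightarrow> (int \<times> int \<Rightarrow> tile) \<Rightarrow> bool" where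
  "is_mosaic n M \<longleftrightarrow> (\<forall>r c. \<not> (0 \<le> r \<and> r < int n \<and> 0 \<le> c \<and> c < int n) \<longrightarrow> M (r, c) = T0)"

text \<open>Suitably connected: connection points agree across every shared edge. Since the tiles
  outside the array are empty, this also forbids connection points on the outer boundary.\<close>

definition suitably_connected :: "(int \<times> int \<Rightarrow> tile) \<Rightarrow> bool" where
  "suitably_connected M \<longleftrightarrow>
     (\<forall>p s. s \<in> conn (M p) \<longleftrightarrow> opp s \<in> conn (M (nbr p s)))"

type_synonym step = "(int \<times> int) \<times> side \<times> side"

definition step_pos :: "step \<Rightarrow> int \<times> int" where
  "step_pos s = fst s"

definition step_in :: "step \<Rightarrow> side" where
  "step_in s = fst (snd s)"

definition step_out :: "step \<Rightarrow> side" where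
  "step_out s = snd (snd s)"

definition step_piece :: "step \<Rightarrow> (int \<times> int) \<times> side set" where
  "step_piece s = (step_pos s, {step_in s, step_out s})"

text \<open>The mosaic depicts a single closed oriented curve (a knot) traversed by the cyclic list xs:
  every step runs along a piece of its tile, consecutive steps (cyclically) pass through a shared
  edge, and every piece of every tile is traversed exactly once.\<close>

definition knot_traversal :: "(int \<times> int \<Rightarrow> tile) \<Rightarrow> step list \<Rightarrow> bool" where
  "knot_traversal M xs \<longleftrightarrow>
     xs \<noteq> [] \<and>
     (\<forall>k < length xs. {step_in (xs ! k), step_out (xs ! k)} \<in> pieces (M (step_pos (xs ! k)))
        \<and> step_in (xs ! k) \<noteq> step_out (xs ! k)) \<and>
     (\<forall>k < length xs.
        step_pos (xs ! ((k + 1) mod length xs)) = nbr (step_pos (xs ! k)) (step_out (xs ! k)) \<and>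
        step_in (xs ! ((k + 1) mod length xs)) = opp (step_out (xs ! k))) \<and>
     distinct (map step_piece xs) \<and>
     set (map step_piece xs) = {(p, e). e \<in> pieces (M p)}"

text \<open>Position (x, z) of a side midpoint relative to the tile centre after the rotation
  (scaled by sqrt 2): N goes to upper-left, E to upper-right, S to lower-right, W to lower-left.\<close>

fun mid :: "side \<Rightarrow> int \<times> int" where
  "mid N = (-1, 1)" | "mid E = (1, 1)" | "mid S = (1, -1)" | "mid W = (-1, -1)"

definition dirv :: "step \<Rightarrow> int \<times> int" where
  "dirv s = (fst (mid (step_out s)) - fst (mid (step_in s)),
             snd (mid (step_out s)) - snd (mid (step_in s)))"

definition cross2 :: "int \<times> int \<Rightarrow> int \<times> int \<Rightarrow> int" where
  "cross2 u v = fst u * snd v - snd u * fst v"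

text \<open>A piece is a cusp iff both its endpoints have the same x-coordinate after rotation
  (arcs N-W and E-S). It is traversed downward iff the exit is lower than the entry.\<close>

definition is_cusp :: "step \<Rightarrow> bool" where
  "is_cusp s \<longleftrightarrow> fst (mid (step_in s)) = fst (mid (step_out s))"

definition down_cusp :: "step \<Rightarrow> bool" where
  "down_cusp s \<longleftrightarrow> is_cusp s \<and> snd (mid (step_out s)) < snd (mid (step_in s))"

definition up_cusp :: "step \<Rightarrow> bool" where
  "up_cusp s \<longleftrightarrow> is_cusp s \<and> snd (mid (step_in s)) < snd (mid (step_out s))"

text \<open>At a crossing tile the strand of negative slope (after rotation: the N-S segment) is over.\<close>

definition neg_slope :: "step \<Rightarrow> bool" where
  "neg_slope s \<longleftrightarrow> fst (dirv s) * snd (dirv s) < 0"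

definition pos_slope :: "step \<Rightarrow> bool" where
  "pos_slope s \<longleftrightarrow> fst (dirv s) * snd (dirv s) > 0"

definition over_step :: "step list \<Rightarrow> int \<times> int \<Rightarrow> step" where
  "over_step xs p = (THE s. s \<in> set xs \<and> step_pos s = p \<and> neg_slope s)"

definition under_step :: "step list \<Rightarrow> int \<times> int \<Rightarrow> step" where
  "under_step xs p = (THE s. s \<in> set xs \<and> step_pos s = p \<and> pos_slope s)"

text \<open>Sign of the crossing at p: positive (right-handed) iff the oriented over strand turns
  counterclockwise (by less than pi) onto the oriented under strand.\<close>

definition crossing_sign :: "step list \<Rightarrow> int \<times> int \<Rightarrow> int" where
  "crossing_sign xs p = sgn (cross2 (dirv (over_step xs p)) (dirv (under_step xs p)))"

definition num_pos_crossings :: "(int \<times> int \<Rightarrow> tile) \<Rightarrow> step list \<Rightarrow> nat" where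
  "num_pos_crossings M xs = card {p. M p = T10 \<and> crossing_sign xs p > 0}"

definition num_neg_crossings :: "(int \<times> int \<Rightarrow> tile) \<Rightarrow> step list \<Rightarrow> nat" where
  "num_neg_crossings M xs = card {p. M p = T10 \<and> crossing_sign xs p < 0}"

definition num_down_cusps :: "step list \<Rightarrow> nat" where
  "num_down_cusps xs = length (filter down_cusp xs)"

definition num_up_cusps :: "step list \<Rightarrow> nat" where
  "num_up_cusps xs = length (filter up_cusp xs)"

definition num_cusps :: "step list \<Rightarrow> nat" where
  "num_cusps xs = length (filter is_cusp xs)"

definition tb :: "(int \<times> int \<Rightarrow> tile) \<Rightarrow> step list \<Rightarrow> real" where
  "tb M xs = real (num_pos_crossings M xs) - real (num_neg_crossings M xs)
             - real (num_cusps xs) / 2"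

definition rot :: "step list \<Rightarrow> real" where
  "rot xs = (real (num_down_cusps xs) - real (num_up_cusps xs)) / 2"

end

theory Submission
  imports Defs
begin

lemma kt_valid:
  assumes "knot_traversal M xs" "s \<in> set xs"
  shows "{step_in s, step_out s} \<in> pieces (M (step_pos s)) \<and> step_in s \<noteq> step_out s"
  using assms unfolding knot_traversal_def by (metis in_set_conv_nth)

lemma kt_inj: "knot_traversal M xs \<Longrightarrow> inj_on step_piece (set xs)"
  unfolding knot_traversal_def using distinct_map by blast

lemma kt_distinct: "knot_traversal M xs \<Longrightarrow> distinct xs"
  unfolding knot_traversal_def using distinct_map by blast

lemma kt_surj:
  assumes "knot_traversal M xs" "e \<in> pieces (M p)"
  shows "\<exists>s\<in>set xs. step_piece s = (p, e)"
proof -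
  have "(p, e) \<in> set (map step_piece xs)" using assms unfolding knot_traversal_def by auto
  thus ?thesis by auto
qed

lemma finite_pieces: "finite (pieces t)" by (cases t) auto

lemma pieces_nonempty: "e \<in> pieces t \<Longrightarrow> t \<noteq> T0" by auto

definition Sp :: "step list \<Rightarrow> int \<times> int \<Rightarrow> step set" where
  "Sp xs p = {s \<in> set xs. step_pos s = p}"

lemma card_Sp:
  assumes "knot_traversal M xs"
  shows "card (Sp xs p) \<le> card (pieces (M p))"
proof -
  have "inj_on (\<lambda>s. {step_in s, step_out s}) (Sp xs p)"
  proof
    fix x y assume "x \<in> Sp xs p" "y \<in> Sp xs p" "{step_in x, step_out x} = {step_in y, step_out y}"
    hence "step_piece x = step_piece y" "x \<in> set xs" "y \<in> set xs"
      unfolding Sp_def step_piece_def by auto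
    thus "x = y" using kt_inj[OF assms] by (meson inj_onD)
  qed
  moreover have "(\<lambda>s. {step_in s, step_out s}) ` Sp xs p \<subseteq> pieces (M p)"
    using kt_valid[OF assms] unfolding Sp_def by auto
  ultimately show ?thesis using card_inj_on_le finite_pieces by blast
qed

definition dv :: "side \<Rightarrow> side \<Rightarrow> int \<times> int" where
  "dv a b = (fst (mid b) - fst (mid a), snd (mid b) - snd (mid a))"

lemma dirv_dv: "dirv s = dv (step_in s) (step_out s)"
  unfolding dirv_def dv_def by simp

lemma pair_cases: "{a, b} = {x, y} \<Longrightarrow> a \<noteq> b \<Longrightarrow> (a = x \<and> b = y) \<or> (a = y \<and> b = x)"
  by (auto simp: doubleton_eq_iff)

lemma T10_steps:
  assumes kt: "knot_traversal M xs" and t: "M p = T10"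
  shows "\<exists>s1 s2. Sp xs p = {s1, s2} \<and> {step_in s1, step_out s1} = {N, S} \<and> step_in s1 \<noteq> step_out s1
      \<and> {step_in s2, step_out s2} = {W, E} \<and> step_in s2 \<noteq> step_out s2
      \<and> over_step xs p = s1 \<and> under_step xs p = s2"
proof -
  obtain s1 where s1: "s1 \<in> set xs" "step_piece s1 = (p, {N, S})"
    using kt_surj[OF kt, of "{N,S}" p] t by auto
  obtain s2 where s2: "s2 \<in> set xs" "step_piece s2 = (p, {W, E})"
    using kt_surj[OF kt, of "{W,E}" p] t by auto
  have p1: "step_pos s1 = p" "{step_in s1, step_out s1} = {N, S}" using s1 unfolding step_piece_def by auto
  have p2: "step_pos s2 = p" "{step_in s2, step_out s2} = {W, E}" using s2 unfolding step_piece_def by auto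
  have ne1: "step_in s1 \<noteq> step_out s1" and ne2: "step_in s2 \<noteq> step_out s2"
    using kt_valid[OF kt s1(1)] kt_valid[OF kt s2(1)] by auto
  have Sp: "Sp xs p = {s1, s2}"
  proof
    show "{s1, s2} \<subseteq> Sp xs p" using s1 s2 p1 p2 unfolding Sp_def by auto
  next
    show "Sp xs p \<subseteq> {s1, s2}"
    proof
      fix s assume s: "s \<in> Sp xs p"
      hence ss: "s \<in> set xs" "step_pos s = p" unfolding Sp_def by auto
      have "{step_in s, step_out s} \<in> pieces (M p)" using kt_valid[OF kt ss(1)] ss by auto
      hence "{step_in s, step_out s} = {N,S} \<or> {step_in s, step_out s} = {W,E}" using t by auto
      hence "step_piece s = step_piece s1 \<or> step_piece s = step_piece s2"
        using s1 s2 ss unfolding step_piece_def by auto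
      thus "s \<in> {s1, s2}" using kt_inj[OF kt] ss s1(1) s2(1) by (metis inj_onD insertCI)
    qed
  qed
  have ns1: "neg_slope s1" using pair_cases[OF p1(2) ne1]
    unfolding neg_slope_def dirv_dv dv_def by auto
  have ns2: "\<not> neg_slope s2" using pair_cases[OF p2(2) ne2]
    unfolding neg_slope_def dirv_dv dv_def by auto
  have ps2: "pos_slope s2" using pair_cases[OF p2(2) ne2]
    unfolding pos_slope_def dirv_dv dv_def by auto
  have ps1: "\<not> pos_slope s1" using pair_cases[OF p1(2) ne1]
    unfolding pos_slope_def dirv_dv dv_def by auto
  have "over_step xs p = s1" unfolding over_step_def
  proof (rule the_equality)
    show "s1 \<in> set xs \<and> step_pos s1 = p \<and> neg_slope s1" using s1 p1 ns1 by auto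
  next
    fix s assume "s \<in> set xs \<and> step_pos s = p \<and> neg_slope s"
    hence "s \<in> Sp xs p" "neg_slope s" unfolding Sp_def by auto
    thus "s = s1" using Sp ns2 by auto
  qed
  moreover have "under_step xs p = s2" unfolding under_step_def
  proof (rule the_equality)
    show "s2 \<in> set xs \<and> step_pos s2 = p \<and> pos_slope s2" using s2 p2 ps2 by auto
  next
    fix s assume "s \<in> set xs \<and> step_pos s = p \<and> pos_slope s"
    hence "s \<in> Sp xs p" "pos_slope s" unfolding Sp_def by auto
    thus "s = s2" using Sp ps1 by auto
  qed
  ultimately show ?thesis using Sp p1 p2 ne1 ne2 by blast
qed

lemma card_pieces: "card (pieces t) \<le> (if t = T7 \<or> t = T8 \<or> t = T10 then 2 else 1)"
proof -
  have "card (insert x {y}) \<le> 2" for x y :: "side set"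
    by (simp add: card_insert_if)
  thus ?thesis by (cases t) simp_all
qed

lemma pos_bound:
  fixes w :: "side \<Rightarrow> side \<Rightarrow> int" and \<kappa> :: int
  assumes kt: "knot_traversal M xs"
    and h1: "\<forall>a b. a \<noteq> b \<longrightarrow> w a b \<le> 2"
    and h2: "\<forall>a b. a \<noteq> b \<longrightarrow> {a,b} \<noteq> {W,E} \<longrightarrow> {a,b} \<noteq> {N,S} \<longrightarrow> w a b \<le> 1"
    and h3: "\<forall>a b c d. {a,b} = {N,S} \<longrightarrow> a \<noteq> b \<longrightarrow> {c,d} = {W,E} \<longrightarrow> c \<noteq> d \<longrightarrow>
               w a b + w c d + \<kappa> * sgn (cross2 (dv a b) (dv c d)) \<le> 2"
  shows "(\<Sum>s\<in>Sp xs p. w (step_in s) (step_out s)) + \<kappa> * (if M p = T10 then crossing_sign xs p else 0) \<le> 2"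
proof (cases "M p = T10")
  case True
  obtain s1 s2 where st: "Sp xs p = {s1, s2}" "{step_in s1, step_out s1} = {N, S}" "step_in s1 \<noteq> step_out s1"
      "{step_in s2, step_out s2} = {W, E}" "step_in s2 \<noteq> step_out s2"
      "over_step xs p = s1" "under_step xs p = s2"
    using T10_steps[OF kt True] by blast
  have "s1 \<noteq> s2" using st(2,4) by (auto simp: doubleton_eq_iff)
  hence "(\<Sum>s\<in>Sp xs p. w (step_in s) (step_out s)) = w (step_in s1) (step_out s1) + w (step_in s2) (step_out s2)"
    using st(1) by simp
  moreover have "crossing_sign xs p = sgn (cross2 (dv (step_in s1) (step_out s1)) (dv (step_in s2) (step_out s2)))"
    unfolding crossing_sign_def st(6,7) dirv_dv ..
  moreover have "w (step_in s1) (step_out s1) + w (step_in s2) (step_out s2) + \<kappa> * sgn (cross2 (dv (step_in s1) (step_out s1)) (dv (step_in s2) (step_out s2))) \<le> 2"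
    using h3 st(2-5) by blast
  ultimately show ?thesis using True by simp
next
  case False
  define b :: int where "b = (if M p = T7 \<or> M p = T8 then 1 else 2)"
  have wb: "w (step_in s) (step_out s) \<le> b" if "s \<in> Sp xs p" for s
  proof -
    have ss: "s \<in> set xs" "step_pos s = p" using that unfolding Sp_def by auto
    have v: "{step_in s, step_out s} \<in> pieces (M p)" "step_in s \<noteq> step_out s"
      using kt_valid[OF kt ss(1)] ss by auto
    have P2: "M p = T7 \<or> M p = T8 \<Longrightarrow> {step_in s, step_out s} \<noteq> {W,E} \<and> {step_in s, step_out s} \<noteq> {N,S}"
      using v(1) by (auto simp: doubleton_eq_iff)
    have "w (step_in s) (step_out s) \<le> 2" using h1 v(2) by blast
    moreover have "M p = T7 \<or> M p = T8 \<Longrightarrow> w (step_in s) (step_out s) \<le> 1" using h2 P2 v(2) by blast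
    ultimately show ?thesis unfolding b_def by auto
  qed
  have cb: "int (card (Sp xs p)) * b \<le> 2"
  proof -
    have c: "card (Sp xs p) \<le> card (pieces (M p))" using card_Sp[OF kt] .
    have "card (pieces (M p)) \<le> (if M p = T7 \<or> M p = T8 then 2 else 1)"
      using False card_pieces[of "M p"] by simp
    thus ?thesis using c unfolding b_def by (auto split: if_splits)
  qed
  have "(\<Sum>s\<in>Sp xs p. w (step_in s) (step_out s)) \<le> of_nat (card (Sp xs p)) * b"
    using wb by (rule sum_bounded_above)
  thus ?thesis using cb False by simp
qed

definition Zc :: "int \<times> int \<Rightarrow> int" where "Zc p = 2 * (snd p - fst p)"

lemma Zc_nbr: "Zc (nbr p s) + snd (mid (opp s)) = Zc p + snd (mid s)"
  by (cases p; cases s) (simp_all add: Zc_def)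

lemma cyclic_sum:
  fixes H :: "nat \<Rightarrow> int"
  assumes "L > 0"
  shows "(\<Sum>k<L. H ((k + 1) mod L)) = (\<Sum>k<L. H k)"
proof -
  obtain m where L: "L = Suc m" using assms by (cases L) auto
  have "(\<Sum>k<Suc m. H ((k + 1) mod Suc m)) = (\<Sum>k<m. H ((k + 1) mod Suc m)) + H 0"
    by simp
  also have "(\<Sum>k<m. H ((k + 1) mod Suc m)) = (\<Sum>k<m. H (Suc k))"
    by (rule sum.cong) auto
  also have "(\<Sum>k<m. H (Suc k)) + H 0 = (\<Sum>k<Suc m. H k)"
    unfolding sum.lessThan_Suc_shift by simp
  finally show ?thesis using L by simp
qed

lemma set_sum_nth:
  fixes f :: "step \<Rightarrow> int"
  assumes "distinct xs"
  shows "(\<Sum>s\<in>set xs. f s) = (\<Sum>k<length xs. f (xs ! k))"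
proof -
  have "(\<Sum>s\<in>set xs. f s) = sum_list (map f xs)"
    using assms by (simp add: sum_list_distinct_conv_sum_set)
  also have "\<dots> = (\<Sum>k = 0..<length xs. f (xs ! k))"
    by (simp add: sum_list_sum_nth)
  finally show ?thesis by (simp add: atLeast0LessThan)
qed

lemma dz_sum:
  assumes kt: "knot_traversal M xs"
  shows "(\<Sum>s\<in>set xs. snd (mid (step_out s)) - snd (mid (step_in s))) = 0"
proof -
  define L where "L = length xs"
  have L0: "L > 0" using kt unfolding knot_traversal_def L_def by auto
  define H where "H k = Zc (step_pos (xs ! k)) + snd (mid (step_in (xs ! k)))" for k
  have step: "snd (mid (step_out (xs ! k))) - snd (mid (step_in (xs ! k))) = H ((k + 1) mod L) - H k"
    if "k < L" for k
  proof -
    have "step_pos (xs ! ((k + 1) mod L)) = nbr (step_pos (xs ! k)) (step_out (xs ! k))"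
       "step_in (xs ! ((k + 1) mod L)) = opp (step_out (xs ! k))"
      using kt that unfolding knot_traversal_def L_def by auto
    thus ?thesis unfolding H_def using Zc_nbr[of "step_pos (xs ! k)" "step_out (xs ! k)"] by simp
  qed
  have "(\<Sum>s\<in>set xs. snd (mid (step_out s)) - snd (mid (step_in s)))
      = (\<Sum>k<L. snd (mid (step_out (xs ! k))) - snd (mid (step_in (xs ! k))))"
    unfolding L_def by (rule set_sum_nth[OF kt_distinct[OF kt]])
  also have "\<dots> = (\<Sum>k<L. H ((k + 1) mod L) - H k)"
    by (rule sum.cong) (auto simp: step)
  also have "\<dots> = 0" using cyclic_sum[OF L0, of H] by (simp add: sum_subtractf)
  finally show ?thesis .
qed

lemma length_filter_sum:
  assumes "distinct xs"
  shows "int (length (filter P xs)) = (\<Sum>s\<in>set xs. if P s then 1 else 0)"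
proof -
  have "length (filter P xs) = card {s \<in> set xs. P s}"
    using distinct_length_filter[OF assms, of P] by (simp add: Int_def conj_commute)
  also have "int \<dots> = (\<Sum>s\<in>{s \<in> set xs. P s}. 1)" by simp
  also have "\<dots> = (\<Sum>s\<in>set xs. if P s then 1 else 0)" by (rule sum.inter_filter) simp
  finally show ?thesis .
qed

definition Pos :: "nat \<Rightarrow> (int \<times> int) set" where
  "Pos n = {0..<int n} \<times> {0..<int n}"

lemma finite_Pos: "finite (Pos n)" unfolding Pos_def by simp

lemma card_Pos: "card (Pos n) = n * n" unfolding Pos_def by (simp add: card_cartesian_product)

lemma in_Pos:
  assumes "is_mosaic n M" "M p \<noteq> T0" shows "p \<in> Pos n"
  using assms unfolding is_mosaic_def Pos_def by (cases p) auto

lemma sum_group_pos: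
  fixes f :: "step \<Rightarrow> int"
  assumes mo: "is_mosaic n M" and kt: "knot_traversal M xs"
  shows "(\<Sum>s\<in>set xs. f s) = (\<Sum>p\<in>Pos n. \<Sum>s\<in>Sp xs p. f s)"
proof -
  have "step_pos ` set xs \<subseteq> Pos n"
  proof
    fix p assume "p \<in> step_pos ` set xs"
    then obtain s where s: "s \<in> set xs" "p = step_pos s" by auto
    have "M p \<noteq> T0" using kt_valid[OF kt s(1)] s(2) by auto
    thus "p \<in> Pos n" using in_Pos[OF mo] by auto
  qed
  from sum.group[OF _ finite_Pos this, of f] show ?thesis unfolding Sp_def by simp
qed

definition crs :: "(int \<times> int \<Rightarrow> tile) \<Rightarrow> step list \<Rightarrow> int \<times> int \<Rightarrow> int" where
  "crs M xs p = (if M p = T10 then crossing_sign xs p else 0)"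

lemma card_T10_pos:
  assumes mo: "is_mosaic n M"
  shows "int (card {p. M p = T10 \<and> Q p}) = (\<Sum>p\<in>Pos n. if M p = T10 \<and> Q p then 1 else 0)"
proof -
  have "{p. M p = T10 \<and> Q p} = {p \<in> Pos n. M p = T10 \<and> Q p}"
    using in_Pos[OF mo] by auto
  hence "int (card {p. M p = T10 \<and> Q p}) = (\<Sum>p\<in>{p \<in> Pos n. M p = T10 \<and> Q p}. 1)" by simp
  also have "\<dots> = (\<Sum>p\<in>Pos n. if M p = T10 \<and> Q p then 1 else 0)"
    by (rule sum.inter_filter) (rule finite_Pos)
  finally show ?thesis .
qed

lemma PN_sum:
  assumes mo: "is_mosaic n M"
  shows "int (num_pos_crossings M xs) - int (num_neg_crossings M xs) = (\<Sum>p\<in>Pos n. crs M xs p)"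
proof -
  have "int (num_pos_crossings M xs) - int (num_neg_crossings M xs)
     = (\<Sum>p\<in>Pos n. (if M p = T10 \<and> crossing_sign xs p > 0 then 1 else 0)
                   - (if M p = T10 \<and> crossing_sign xs p < 0 then 1 else 0))"
    unfolding num_pos_crossings_def num_neg_crossings_def card_T10_pos[OF mo] sum_subtractf ..
  also have "\<dots> = (\<Sum>p\<in>Pos n. crs M xs p)"
    by (rule sum.cong) (auto simp: crs_def crossing_sign_def sgn_if)
  finally show ?thesis .
qed

lemma main_bound:
  fixes w :: "side \<Rightarrow> side \<Rightarrow> int" and \<kappa> :: int
  assumes mo: "is_mosaic n M" and kt: "knot_traversal M xs"
    and h1: "\<forall>a b. a \<noteq> b \<longrightarrow> w a b \<le> 2"
    and h2: "\<forall>a b. a \<noteq> b \<longrightarrow> {a,b} \<noteq> {W,E} \<longrightarrow> {a,b} \<noteq> {N,S} \<longrightarrow> w a b \<le> 1"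
    and h3: "\<forall>a b c d. {a,b} = {N,S} \<longrightarrow> a \<noteq> b \<longrightarrow> {c,d} = {W,E} \<longrightarrow> c \<noteq> d \<longrightarrow>
               w a b + w c d + \<kappa> * sgn (cross2 (dv a b) (dv c d)) \<le> 2"
  shows "(\<Sum>s\<in>set xs. w (step_in s) (step_out s))
           + \<kappa> * (int (num_pos_crossings M xs) - int (num_neg_crossings M xs)) \<le> 2 * int (n * n)"
proof -
  have "(\<Sum>s\<in>set xs. w (step_in s) (step_out s))
           + \<kappa> * (int (num_pos_crossings M xs) - int (num_neg_crossings M xs))
        = (\<Sum>p\<in>Pos n. (\<Sum>s\<in>Sp xs p. w (step_in s) (step_out s)) + \<kappa> * crs M xs p)"
    unfolding sum_group_pos[OF mo kt] PN_sum[OF mo] sum.distrib sum_distrib_left ..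
  also have "\<dots> \<le> (\<Sum>p\<in>Pos n. 2)"
    by (rule sum_mono) (unfold crs_def, rule pos_bound[OF kt h1 h2 h3])
  also have "\<dots> = 2 * int (n * n)" by (simp add: card_Pos)
  finally show ?thesis .
qed

definition dcw :: "side \<Rightarrow> side \<Rightarrow> int" where
  "dcw a b = (if fst (mid a) = fst (mid b) \<and> snd (mid b) < snd (mid a) then 1 else 0)"
definition ucw :: "side \<Rightarrow> side \<Rightarrow> int" where
  "ucw a b = (if fst (mid a) = fst (mid b) \<and> snd (mid a) < snd (mid b) then 1 else 0)"
definition ccw :: "side \<Rightarrow> side \<Rightarrow> int" where
  "ccw a b = (if fst (mid a) = fst (mid b) then 1 else 0)"
definition dzw :: "side \<Rightarrow> side \<Rightarrow> int" where
  "dzw a b = snd (mid b) - snd (mid a)"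

definition w1 :: "side \<Rightarrow> side \<Rightarrow> int" where "w1 a b = 3 * dcw a b - 5 * ucw a b + dzw a b"
definition w2 :: "side \<Rightarrow> side \<Rightarrow> int" where "w2 a b = 3 * ucw a b - 5 * dcw a b - dzw a b"

lemma ccw_split: "a \<noteq> b \<Longrightarrow> ccw a b = dcw a b + ucw a b"
  by (cases a; cases b) (simp_all add: ccw_def dcw_def ucw_def)

lemma w1_h1: "\<forall>a b. a \<noteq> b \<longrightarrow> w1 a b \<le> 2"
  by (intro allI; case_tac a; case_tac b) (simp_all add: w1_def dcw_def ucw_def dzw_def)
lemma w1_h2: "\<forall>a b. a \<noteq> b \<longrightarrow> {a,b} \<noteq> {W,E} \<longrightarrow> {a,b} \<noteq> {N,S} \<longrightarrow> w1 a b \<le> 1"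
  by (intro allI; case_tac a; case_tac b) (simp_all add: w1_def dcw_def ucw_def dzw_def doubleton_eq_iff)
lemma w1_h3: "\<forall>a b c d. {a,b} = {N,S} \<longrightarrow> a \<noteq> b \<longrightarrow> {c,d} = {W,E} \<longrightarrow> c \<noteq> d \<longrightarrow>
               w1 a b + w1 c d + 2 * sgn (cross2 (dv a b) (dv c d)) \<le> 2"
  by (auto simp: doubleton_eq_iff w1_def dcw_def ucw_def dzw_def dv_def cross2_def)
lemma w2_h1: "\<forall>a b. a \<noteq> b \<longrightarrow> w2 a b \<le> 2"
  by (intro allI; case_tac a; case_tac b) (simp_all add: w2_def dcw_def ucw_def dzw_def)
lemma w2_h2: "\<forall>a b. a \<noteq> b \<longrightarrow> {a,b} \<noteq> {W,E} \<longrightarrow> {a,b} \<noteq> {N,S} \<longrightarrow> w2 a b \<le> 1"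
  by (intro allI; case_tac a; case_tac b) (simp_all add: w2_def dcw_def ucw_def dzw_def doubleton_eq_iff)
lemma w2_h3: "\<forall>a b c d. {a,b} = {N,S} \<longrightarrow> a \<noteq> b \<longrightarrow> {c,d} = {W,E} \<longrightarrow> c \<noteq> d \<longrightarrow>
               w2 a b + w2 c d + 2 * sgn (cross2 (dv a b) (dv c d)) \<le> 2"
  by (auto simp: doubleton_eq_iff w2_def dcw_def ucw_def dzw_def dv_def cross2_def)
lemma w3_h1: "\<forall>a b. a \<noteq> b \<longrightarrow> ccw a b \<le> 2"
  by (simp add: ccw_def)
lemma w3_h2: "\<forall>a b. a \<noteq> b \<longrightarrow> {a,b} \<noteq> {W,E} \<longrightarrow> {a,b} \<noteq> {N,S} \<longrightarrow> ccw a b \<le> 1"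
  by (simp add: ccw_def)
lemma w3_h3: "\<forall>a b c d. {a,b} = {N,S} \<longrightarrow> a \<noteq> b \<longrightarrow> {c,d} = {W,E} \<longrightarrow> c \<noteq> d \<longrightarrow>
               ccw a b + ccw c d + (-2) * sgn (cross2 (dv a b) (dv c d)) \<le> 2"
  by (auto simp: doubleton_eq_iff ccw_def dv_def cross2_def)

lemma count_sum:
  assumes "distinct xs" and "\<And>s. P s \<longleftrightarrow> f (step_in s) (step_out s) = 1"
    and "\<And>a b. f a b = 0 \<or> f a b = 1"
  shows "int (length (filter P xs)) = (\<Sum>s\<in>set xs. f (step_in s) (step_out s))"
  unfolding length_filter_sum[OF assms(1)]
  by (rule sum.cong) (use assms(2,3) in \<open>auto\<close>, metis assms(2,3))

theorem theorem2p5: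
  fixes n :: nat and M :: "int \<times> int \<Rightarrow> tile" and xs :: "step list"
  assumes "is_mosaic n M"
    and "suitably_connected M"
    and "knot_traversal M xs"
  shows "real (n ^ 2) \<ge> 4 * \<bar>rot xs\<bar> + tb M xs \<and> real (n ^ 2) \<ge> - tb M xs"
proof -
  note mo = assms(1) and kt = assms(3)
  have dist: "distinct xs" using kt_distinct[OF kt] .
  define D where "D = int (num_down_cusps xs)"
  define U where "U = int (num_up_cusps xs)"
  define C where "C = int (num_cusps xs)"
  define PN where "PN = int (num_pos_crossings M xs) - int (num_neg_crossings M xs)"
  have D: "D = (\<Sum>s\<in>set xs. dcw (step_in s) (step_out s))"
    unfolding D_def num_down_cusps_def
    by (rule count_sum[OF dist]) (auto simp: dcw_def down_cusp_def is_cusp_def)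
  have U: "U = (\<Sum>s\<in>set xs. ucw (step_in s) (step_out s))"
    unfolding U_def num_up_cusps_def
    by (rule count_sum[OF dist]) (auto simp: ucw_def up_cusp_def is_cusp_def)
  have C0: "C = (\<Sum>s\<in>set xs. ccw (step_in s) (step_out s))"
    unfolding C_def num_cusps_def
    by (rule count_sum[OF dist]) (auto simp: ccw_def is_cusp_def)
  have "(\<Sum>s\<in>set xs. ccw (step_in s) (step_out s))
      = (\<Sum>s\<in>set xs. dcw (step_in s) (step_out s) + ucw (step_in s) (step_out s))"
    by (rule sum.cong) (auto intro: ccw_split dest: kt_valid[OF kt])
  hence C: "C = D + U" unfolding C0 D U sum.distrib .
  have Z: "(\<Sum>s\<in>set xs. dzw (step_in s) (step_out s)) = 0"
    using dz_sum[OF kt] unfolding dzw_def .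
  have S1: "(\<Sum>s\<in>set xs. w1 (step_in s) (step_out s)) = 3 * D - 5 * U"
    unfolding w1_def sum.distrib sum_subtractf sum_distrib_left[symmetric] D U Z by simp
  have S2: "(\<Sum>s\<in>set xs. w2 (step_in s) (step_out s)) = 3 * U - 5 * D"
    unfolding w2_def sum.distrib sum_subtractf sum_distrib_left[symmetric] D U Z by simp
  have A: "3 * D - 5 * U + 2 * PN \<le> 2 * int (n * n)"
    using main_bound[OF mo kt w1_h1 w1_h2 w1_h3] unfolding S1 PN_def .
  have B: "3 * U - 5 * D + 2 * PN \<le> 2 * int (n * n)"
    using main_bound[OF mo kt w2_h1 w2_h2 w2_h3] unfolding S2 PN_def .
  have E: "C + (-2) * PN \<le> 2 * int (n * n)"
    using main_bound[OF mo kt w3_h1 w3_h2 w3_h3] unfolding C0[symmetric] PN_def .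
  have key: "\<And>(d::real) (u::real) (p::real) (c::real) (x::real). c = d + u \<Longrightarrow> 3*d - 5*u + 2*p \<le> 2*x \<Longrightarrow> 3*u - 5*d + 2*p \<le> 2*x
      \<Longrightarrow> c - 2*p \<le> 2*x \<Longrightarrow> x \<ge> 4 * \<bar>(d - u) / 2\<bar> + (p - c / 2) \<and> x \<ge> - (p - c / 2)"
    by (cases "d < u") (simp_all add: abs_if field_simps)
  have nn: "real (n ^ 2) = real_of_int (int (n * n))" by (simp add: power2_eq_square)
  have A': "3 * real_of_int D - 5 * real_of_int U + 2 * real_of_int PN \<le> 2 * real (n ^ 2)"
    unfolding nn using A by linarith
  have B': "3 * real_of_int U - 5 * real_of_int D + 2 * real_of_int PN \<le> 2 * real (n ^ 2)"
    unfolding nn using B by linarith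
  have E': "real_of_int C - 2 * real_of_int PN \<le> 2 * real (n ^ 2)"
    unfolding nn using E by linarith
  have C': "real_of_int C = real_of_int D + real_of_int U" using C by simp
  have tbe: "tb M xs = real_of_int PN - real_of_int C / 2"
    unfolding tb_def PN_def C_def by simp
  have rote: "rot xs = (real_of_int D - real_of_int U) / 2"
    unfolding rot_def D_def U_def by simp
  show ?thesis unfolding tbe rote by (rule key[OF C' A' B' E'])
qed

end
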